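(* Let $\mathrm{X},\mathrm{Y}$ be locally compact Hausdorff spaces, let $F(\mathrm{X})\subset C_0(\mathrm{X})_+$ contain sufficiently many functions to peak on compact $G_\delta$ subsets of $\mathrm{X}$, and let $T:F(\mathrm{X})\to C_0(\mathrm{Y})_+$ satisfy $\|Tf_1+\cdots+Tf_n\|=\|f_1+\cdots+f_n\|$ for all $n\in\mathbb{N}$ and $f_1,\dots,f_n\in F(\mathrm{X})$. Then for every $x_0\in\mathrm{X}$, every $f\in F(\mathrm{X})$ and every $y\in\operatorname{psupp}_T(x_0)$ we have $(Tf)(y)\le f(x_0)$.
   Context: $C_0(\mathrm{X})_+$: nonnegative continuous functions vanishing at infinity, sup-norm. $\operatorname{pk}(f)=\{x: f(x)=\|f\|\}$. $F(\mathrm{X})$ "contains sufficiently many functions to peak on compact $G_\delta$ subsets" if every nonempty compact $G_\delta$ set $K\subset\mathrm{X}$ equals $\operatorname{pk}(f)$ for some $f\in F(\mathrm{X})$. For $x\in\mathrm{X}$: $\operatorname{PKat}(x)=\{g\in F(\mathrm{X}): g(x)=\|g\|\}$ and $\operatorname{psupp}_T(x)=\bigcap_{h\in\operatorname{PKat}(x)}\operatorname{pk}(Th)\subset\mathrm{Y}$. *)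

theory Defs
  imports "HOL-Analysis.Analysis"
begin

text \<open>Nonnegative continuous real functions on the topological space X vanishing
at infinity (only values on the carrier matter).\<close>
definition C0_plus :: "'a topology \<Rightarrow> ('a \<Rightarrow> real) set" where
  "C0_plus X = {f. continuous_map X euclideanreal f \<and> (\<forall>x\<in>topspace X. 0 \<le> f x) \<and>
      (\<forall>e>0. compactin X {x \<in> topspace X. e \<le> f x})}"

definition supnorm :: "'a topology \<Rightarrow> ('a \<Rightarrow> real) \<Rightarrow> real" where
  "supnorm X f = Sup (insert 0 ((\<lambda>x. \<bar>f x\<bar>) ` topspace X))"

definition pk :: "'a topology \<Rightarrow> ('a \<Rightarrow> real) \<Rightarrow> 'a set" where
  "pk X f = {x \<in> topspace X. f x = supnorm X f}"

definition gdelta_in :: "'a topology \<Rightarrow> 'a set \<Rightarrow> bool" where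
  "gdelta_in X K \<longleftrightarrow> (\<exists>U :: nat \<Rightarrow> 'a set. (\<forall>n. openin X (U n)) \<and> K = \<Inter> (range U))"

definition peaks_on_compact_gdelta :: "'a topology \<Rightarrow> ('a \<Rightarrow> real) set \<Rightarrow> bool" where
  "peaks_on_compact_gdelta X F \<longleftrightarrow>
     (\<forall>K. K \<noteq> {} \<and> compactin X K \<and> gdelta_in X K \<longrightarrow> (\<exists>f\<in>F. pk X f = K))"

definition PKat :: "'a topology \<Rightarrow> ('a \<Rightarrow> real) set \<Rightarrow> 'a \<Rightarrow> ('a \<Rightarrow> real) set" where
  "PKat X F x = {g \<in> F. g x = supnorm X g}"

definition psupp :: "'a topology \<Rightarrow> 'b topology \<Rightarrow> ('a \<Rightarrow> real) set
    \<Rightarrow> (('a \<Rightarrow> real) \<Rightarrow> ('b \<Rightarrow> real)) \<Rightarrow> 'a \<Rightarrow> 'b set" where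
  "psupp X Y F T x = {y \<in> topspace Y. \<forall>h \<in> PKat X F x. y \<in> pk Y (T h)}"

end

theory Submission
  imports Defs
begin

lemma C0_bdd:
  assumes "f \<in> C0_plus X" shows "\<exists>B. \<forall>x\<in>topspace X. \<bar>f x\<bar> \<le> B"
proof -
  let ?S = "{x \<in> topspace X. 1 \<le> f x}"
  have c: "compactin X ?S" and cont: "continuous_map X euclideanreal f"
    and nn: "\<forall>x\<in>topspace X. 0 \<le> f x"
    using assms by (auto simp: C0_plus_def)
  have "compact (f ` ?S)" using image_compactin[OF c cont] by simp
  then obtain B where B: "\<forall>y\<in>f ` ?S. \<bar>y\<bar> \<le> B"
    using compact_imp_bounded bounded_real by metis
  have "\<bar>f x\<bar> \<le> max 1 B" if "x \<in> topspace X" for x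
  proof (cases "1 \<le> f x")
    case True
    then have "\<bar>f x\<bar> \<le> B" using B that by auto
    then show ?thesis by simp
  next
    case False
    then show ?thesis using nn that by auto
  qed
  then show ?thesis by blast
qed

lemma supnorm_upper:
  assumes "\<forall>x\<in>topspace X. \<bar>f x\<bar> \<le> B" "x \<in> topspace X"
  shows "\<bar>f x\<bar> \<le> supnorm X f"
  unfolding supnorm_def
  by (rule cSup_upper) (use assms in \<open>auto intro!: bdd_aboveI[of _ "max 0 B"]\<close>)

lemma supnorm_nonneg:
  assumes "\<forall>x\<in>topspace X. \<bar>f x\<bar> \<le> B"
  shows "0 \<le> supnorm X f"
  unfolding supnorm_def
  by (rule cSup_upper) (use assms in \<open>auto intro!: bdd_aboveI[of _ "max 0 B"]\<close>)

lemma supnorm_least: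
  assumes "\<forall>x\<in>topspace X. \<bar>f x\<bar> \<le> B" "0 \<le> B"
  shows "supnorm X f \<le> B"
  unfolding supnorm_def
  by (rule cSup_least) (use assms in auto)

theorem mainTheorem17:
  fixes X :: "'a topology" and Y :: "'b topology"
    and F :: "('a \<Rightarrow> real) set" and T :: "('a \<Rightarrow> real) \<Rightarrow> ('b \<Rightarrow> real)"
  assumes "locally_compact_space X" and "Hausdorff_space X"
    and "locally_compact_space Y" and "Hausdorff_space Y"
    and "F \<subseteq> C0_plus X"
    and "peaks_on_compact_gdelta X F"
    and "\<forall>f\<in>F. T f \<in> C0_plus Y"
    and "\<forall>fs. set fs \<subseteq> F \<longrightarrow>
           supnorm Y (\<lambda>y. sum_list (map (\<lambda>f. T f y) fs)) =
           supnorm X (\<lambda>x. sum_list (map (\<lambda>f. f x) fs))"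
    and "x0 \<in> topspace X" and "f \<in> F" and "y \<in> psupp X Y F T x0"
  shows "T f y \<le> f x0"
proof (rule ccontr)
  assume "\<not> T f y \<le> f x0"
  hence lt: "f x0 < T f y" by simp
  define c where "c = (f x0 + T f y)/2"
  have c1: "f x0 < c" "c < T f y" using lt by (auto simp: c_def)
  have fC: "f \<in> C0_plus X" using assms(5,10) by auto
  have fcont: "continuous_map X euclideanreal f" and fnn: "\<forall>x\<in>topspace X. 0 \<le> f x"
    using fC by (auto simp: C0_plus_def)
  have c0: "0 < c" using c1 fnn assms(9) by fastforce
  define U where "U = {x \<in> topspace X. f x < c}"
  have "openin X {x \<in> topspace X. f x \<in> {..<c}}"
    by (rule openin_continuous_map_preimage[OF fcont]) auto
  then have Uo: "openin X U" by (simp add: U_def)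
  have x0U: "x0 \<in> U" using assms(9) c1 by (auto simp: U_def)
  have reg: "regular_space X"
    using assms(1,2) locally_compact_Hausdorff_imp_regular_space by blast
  have cr: "completely_regular_space X"
    using locally_compact_regular_imp_completely_regular_space assms(1,2) by blast
  obtain V N where V: "openin X V" "compactin X N" "x0 \<in> V" "V \<subseteq> N" "N \<subseteq> U"
    using locally_compact_imp_neighbourhood_base[OF assms(1) reg] Uo x0U
    unfolding neighbourhood_base_of by metis
  have "closedin X (topspace X - V) \<and> x0 \<in> topspace X - (topspace X - V)"
    using V(1,3) assms(9) by blast
  then have "\<exists>g::'a\<Rightarrow>real. continuous_map X (top_of_set {0..1::real}) g \<and> g x0 = 0 \<and>
    g ` (topspace X - V) \<subseteq> {1}"
    by (rule cr[unfolded completely_regular_space_def, rule_format])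
  then obtain g where g: "continuous_map X (top_of_set {0..1::real}) g" "g x0 = 0"
    "g ` (topspace X - V) \<subseteq> {1}" by blast
  have gc: "continuous_map X euclideanreal g" and grange: "g ` topspace X \<subseteq> {0..1}"
    using g(1) by (simp_all add: continuous_map_in_subtopology image_subset_iff_funcset)
  define K where "K = {x \<in> topspace X. g x = 0}"
  have KV: "K \<subseteq> V" using g(3) by (force simp: K_def)
  have "closedin X {x \<in> topspace X. g x \<in> {0}}"
    by (rule closedin_continuous_map_preimage[OF gc]) auto
  then have Kcl: "closedin X K" by (simp add: K_def)
  have Kc: "compactin X K" using closed_compactin[OF V(2) _ Kcl] KV V(4) by blast
  have x0K: "x0 \<in> K" using g(2) assms(9) K_def by auto
  have Kne: "K \<noteq> {}" using x0K by auto
  have Kg: "gdelta_in X K"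
    unfolding gdelta_in_def
  proof (intro exI conjI allI)
    fix n
    show "openin X {x \<in> topspace X. g x \<in> {..< 1/(Suc n)}}"
      by (rule openin_continuous_map_preimage[OF gc]) auto
  next
    show "K = \<Inter> (range (\<lambda>n. {x \<in> topspace X. g x \<in> {..< 1/real (Suc n)}}))"
    proof
      show "K \<subseteq> \<Inter> (range (\<lambda>n. {x \<in> topspace X. g x \<in> {..< 1/real (Suc n)}}))"
        by (auto simp: K_def)
    next
      show "\<Inter> (range (\<lambda>n. {x \<in> topspace X. g x \<in> {..< 1/real (Suc n)}})) \<subseteq> K"
      proof
        fix x assume x: "x \<in> \<Inter> (range (\<lambda>n. {x \<in> topspace X. g x \<in> {..< 1/real (Suc n)}}))"
        then have xt: "x \<in> topspace X" and all: "\<And>n. g x < 1/real (Suc n)" by auto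
        have g0: "0 \<le> g x" using grange xt by auto
        have "g x = 0"
        proof (rule ccontr)
          assume "g x \<noteq> 0"
          then have "0 < g x" using g0 by simp
          then obtain n where "inverse (real (Suc n)) < g x" using reals_Archimedean by blast
          then show False using all[of n] by (simp add: field_simps)
        qed
        then show "x \<in> K" using xt by (simp add: K_def)
      qed
    qed
  qed
  obtain h where h: "h \<in> F" "pk X h = K"
    using assms(6) Kne Kc Kg unfolding peaks_on_compact_gdelta_def by blast
  have hC: "h \<in> C0_plus X" using assms(5) h(1) by auto
  have hnn: "\<forall>x\<in>topspace X. 0 \<le> h x" using hC by (auto simp: C0_plus_def)
  obtain Bh where Bh: "\<forall>x\<in>topspace X. \<bar>h x\<bar> \<le> Bh" using C0_bdd hC by blast
  obtain Bf where Bf: "\<forall>x\<in>topspace X. \<bar>f x\<bar> \<le> Bf" using C0_bdd fC by blast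
  define nh where "nh = supnorm X h"
  have nh0: "0 \<le> nh" unfolding nh_def using supnorm_nonneg Bh by blast
  have hle: "h x \<le> nh" if "x \<in> topspace X" for x
    using supnorm_upper[OF Bh that] unfolding nh_def by linarith
  have hlt: "h x < nh" if "x \<in> topspace X" "x \<notin> U" for x
  proof -
    have "x \<notin> K" using that KV V(4,5) by blast
    then have "h x \<noteq> nh" using h(2) that(1) unfolding pk_def nh_def by auto
    then show ?thesis using hle[OF that(1)] by simp
  qed
  have hPK: "h \<in> PKat X F x0" using h x0K unfolding PKat_def pk_def by auto
  have yPK: "T h y = supnorm Y (T h)" and yY: "y \<in> topspace Y"
    using assms(11) hPK unfolding psupp_def pk_def by auto
  have "supnorm Y (\<lambda>y. T h y) = supnorm X (\<lambda>x. h x)"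
    using assms(8)[rule_format, of "[h]"] h(1) by simp
  then have Thy: "T h y = nh" using yPK by (simp add: nh_def)
  obtain \<delta> where \<delta>: "\<delta> > 0" "\<And>x. x \<in> topspace X \<Longrightarrow> x \<notin> U \<Longrightarrow> h x \<le> nh - \<delta>"
  proof (cases "nh > 0")
    case False
    show ?thesis
    proof (rule that[of 1])
      fix x assume "x \<in> topspace X" "x \<notin> U"
      then show "h x \<le> nh - 1" using hlt hnn False by fastforce
    qed simp
  next
    case True
    define C where "C = {x \<in> topspace X. h x \<in> {nh/2..}} \<inter> {x \<in> topspace X. f x \<in> {c..}}"
    have hcont: "continuous_map X euclideanreal h" using hC by (auto simp: C0_plus_def)
    have Ccl: "closedin X C" unfolding C_def
      by (intro closedin_Int closedin_continuous_map_preimage[OF hcont]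
          closedin_continuous_map_preimage[OF fcont]) auto
    have hcpt: "\<forall>e>0. compactin X {x \<in> topspace X. e \<le> h x}" using hC by (simp add: C0_plus_def)
    have Sc: "compactin X {x \<in> topspace X. nh/2 \<le> h x}"
      by (rule hcpt[rule_format]) (use True in simp)
    have Cc: "compactin X C"
      by (rule closed_compactin[OF Sc _ Ccl]) (auto simp: C_def)
    have Cmem: "x \<in> C \<longleftrightarrow> x \<in> topspace X \<and> nh/2 \<le> h x \<and> x \<notin> U" for x
      by (auto simp: C_def U_def)
    show ?thesis
    proof (cases "C = {}")
      case True
      show ?thesis
      proof (rule that[of "nh/2"])
        fix x assume "x \<in> topspace X" "x \<notin> U"
        then show "h x \<le> nh - nh/2" using True Cmem[of x] by fastforce
      qed (use \<open>nh > 0\<close> in simp)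
    next
      case False
      have "compact (h ` C)" using image_compactin[OF Cc hcont] by simp
      then obtain s where s: "s \<in> C" "\<forall>t\<in>C. h t \<le> h s"
        using compact_attains_sup[of "h ` C"] False by auto
      have hs: "h s < nh" using s(1) Cmem[of s] hlt by blast
      show ?thesis
      proof (rule that[of "min (nh/2) (nh - h s)"])
        fix x assume x: "x \<in> topspace X" "x \<notin> U"
        show "h x \<le> nh - min (nh/2) (nh - h s)"
        proof (cases "nh/2 \<le> h x")
          case True
          then have "x \<in> C" using Cmem x by blast
          then show ?thesis using s(2) by fastforce
        next
          case False
          then show ?thesis by linarith
        qed
      qed (use \<open>nh > 0\<close> hs in simp)
    qed
  qed
  obtain m :: nat where m: "Bf / \<delta> \<le> real m" using real_arch_simple by blast
  have mB: "Bf \<le> real m * \<delta>" using m \<delta>(1) by (simp add: field_simps)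
  have eq: "supnorm Y (\<lambda>y. T f y + real m * T h y) = supnorm X (\<lambda>x. f x + real m * h x)"
    using assms(8)[rule_format, of "f # replicate m h"] h(1) assms(10)
    by (simp add: sum_list_replicate set_replicate_conv_if)
  have TfC: "T f \<in> C0_plus Y" and ThC: "T h \<in> C0_plus Y" using assms(7,10) h(1) by auto
  obtain BTf where BTf: "\<forall>x\<in>topspace Y. \<bar>T f x\<bar> \<le> BTf" using C0_bdd TfC by blast
  obtain BTh where BTh: "\<forall>x\<in>topspace Y. \<bar>T h x\<bar> \<le> BTh" using C0_bdd ThC by blast
  have Tnn: "\<forall>x\<in>topspace Y. 0 \<le> T f x \<and> 0 \<le> T h x" using TfC ThC by (auto simp: C0_plus_def)
  have bY: "\<forall>x\<in>topspace Y. \<bar>T f x + real m * T h x\<bar> \<le> BTf + real m * BTh"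
  proof
    fix x assume x: "x \<in> topspace Y"
    have "real m * T h x \<le> real m * BTh" using BTh x by (intro mult_left_mono) auto
    moreover have "0 \<le> real m * T h x" using Tnn x by simp
    ultimately show "\<bar>T f x + real m * T h x\<bar> \<le> BTf + real m * BTh"
      using BTf Tnn x by fastforce
  qed
  have low: "T f y + real m * nh \<le> supnorm Y (\<lambda>y. T f y + real m * T h y)"
    using supnorm_upper[OF bY yY] Thy by simp
  have bX: "\<forall>x\<in>topspace X. \<bar>f x + real m * h x\<bar> \<le> real m * nh + c"
  proof
    fix x assume x: "x \<in> topspace X"
    have hx0: "0 \<le> real m * h x" using hnn x by simp
    show "\<bar>f x + real m * h x\<bar> \<le> real m * nh + c"
    proof (cases "x \<in> U")
      case True
      then have "f x < c" by (simp add: U_def)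
      moreover have "real m * h x \<le> real m * nh" using hle x by (intro mult_left_mono) auto
      ultimately show ?thesis using fnn x hx0 by fastforce
    next
      case False
      have "real m * h x \<le> real m * (nh - \<delta>)" using \<delta>(2)[OF x False] by (intro mult_left_mono) auto
      moreover have "f x \<le> Bf" using Bf x by fastforce
      ultimately show ?thesis using fnn x hx0 mB c0 by (simp add: algebra_simps)
    qed
  qed
  have up: "supnorm X (\<lambda>x. f x + real m * h x) \<le> real m * nh + c"
    by (rule supnorm_least[OF bX]) (use nh0 c0 in simp)
  show False using low up eq c1 by linarith
qed

end
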